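(* Let $\phi(u)=\frac{1}{\sqrt{2\pi}}e^{-u^2/2}$ and $Q(u)=\int_u^{\infty}\phi(t)\,dt$. (i) (DCO-OFDM) Fix $\sigma_y>0$ and $\epsilon_{top}\in\mathbb{R}$. The function $$P_{DCO}(\epsilon_B)=\epsilon_B\sigma_y+\sigma_y\big[\phi(\epsilon_B)-\phi(\epsilon_{top}-\epsilon_B)+(\epsilon_{top}-\epsilon_B)\phi(\epsilon_{top}-\epsilon_B)-\epsilon_B Q(\epsilon_B)\big],\qquad \epsilon_B\in\mathbb{R},$$ is not convex. (ii) (ACO-OFDM) Fix $y_{max}>0$ and an integer $m\ge 1$. For $\mathbf{w}=(w_1,\dots,w_m)\in\mathbb{R}^m\setminus\{0\}$ let $\sigma_y=\sqrt{\sum_{i=1}^m w_i^2}$ and $\epsilon_{top}=y_{max}/\sigma_y$. The function $$P_{ACO}(\mathbf{w})=\frac{\sigma_y}{\sqrt{2\pi}}+\sigma_y\big[\epsilon_{top}Q(\epsilon_{top})-\phi(\epsilon_{top})\big]$$ is not convex on $\mathbb{R}^m\setminus\{0\}$, i.e., there is a line segment contained in $\mathbb{R}^m\setminus\{0\}$ on which the restriction of $P_{ACO}$ is not convex.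
   Context: These functions are the mean transmitted optical power constraints in the subcarrier power allocation problems: for DCO-OFDM, $P_{DCO}=B_{DC}+\beta_{DCO}$ with DC bias $B_{DC}=\epsilon_B\sigma_y$, bias level $\epsilon_B$, top clipping level $\epsilon_{top}$ (peak power $y_{max}=\epsilon_{top}\sigma_y$), and $\sigma_y$ the RMS of the time-domain OFDM signal; for ACO-OFDM, $\sigma_y=\sqrt{\sum w_i^2}$ where $w_i$ are the subcarrier amplitude scale coefficients and $y_{max}$ is the fixed peak power. The lemma asserts that these constraint functions are non-convex. *)

theory Defs
  imports "HOL-Analysis.Analysis"
begin

definition gauss_phi :: "real \<Rightarrow> real" where
  "gauss_phi u = exp (- (u\<^sup>2) / 2) / sqrt (2 * pi)"

definition gauss_Q :: "real \<Rightarrow> real" where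
  "gauss_Q u = integral {u..} gauss_phi"

definition P_DCO :: "real \<Rightarrow> real \<Rightarrow> real \<Rightarrow> real" where
  "P_DCO \<sigma>y \<epsilon>top \<epsilon>B =
     \<epsilon>B * \<sigma>y + \<sigma>y * (gauss_phi \<epsilon>B - gauss_phi (\<epsilon>top - \<epsilon>B)
        + (\<epsilon>top - \<epsilon>B) * gauss_phi (\<epsilon>top - \<epsilon>B) - \<epsilon>B * gauss_Q \<epsilon>B)"

definition sigma_y :: "real ^ 'n \<Rightarrow> real" where
  "sigma_y w = sqrt (\<Sum>i\<in>UNIV. (w $ i)\<^sup>2)"

definition P_ACO :: "real \<Rightarrow> real ^ 'n \<Rightarrow> real" where
  "P_ACO ymax w =
     (let \<sigma> = sigma_y w; et = ymax / \<sigma>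
      in \<sigma> / sqrt (2 * pi) + \<sigma> * (et * gauss_Q et - gauss_phi et))"

end

theory Submission
  imports Defs
begin
lemma phi_cont: "continuous_on S gauss_phi"
  unfolding gauss_phi_def by (intro continuous_intros) auto

lemma phi_pos: "gauss_phi x > 0"
  unfolding gauss_phi_def by auto

lemma phi_deriv: "(gauss_phi has_real_derivative (- x * gauss_phi x)) (at x)"
  unfolding gauss_phi_def
  by (auto intro!: derivative_eq_intros simp: power2_eq_square field_simps)

lemma phi_integrable: "gauss_phi integrable_on {a..}"
proof (rule integrable_on_all_intervals_integrable_bound[where g = "\<lambda>x. exp (1/2) / sqrt (2*pi) * exp (-1*x)"])
  fix c d :: real
  have "gauss_phi integrable_on ({a..} \<inter> cbox c d)"
    using phi_cont by (simp add: integrable_continuous_interval)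
  then show "(\<lambda>x. if x \<in> {a..} then gauss_phi x else 0) integrable_on cbox c d"
    using integrable_restrict_Int by blast
next
  fix x :: real
  have "- (x\<^sup>2) / 2 \<le> 1/2 + (-1*x)"
    using sum_power2_ge_zero[of "x - 1" 0] by (simp add: power2_eq_square algebra_simps)
  then have "exp (- (x\<^sup>2) / 2) \<le> exp (1/2) * exp (-1*x)"
    by (simp add: exp_add[symmetric])
  then show "norm (gauss_phi x) \<le> exp (1/2) / sqrt (2*pi) * exp (-1*x)"
    unfolding gauss_phi_def by (simp add: divide_right_mono)
next
  show "(\<lambda>x. exp (1/2) / sqrt (2*pi) * exp (-1*x)) integrable_on {a..}"
    by (intro integrable_on_mult_right integrable_on_exp_minus_to_infinity) auto
qed

lemma Q_split:
  assumes "a \<le> e"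
  shows "gauss_Q e = gauss_Q a - integral {a..e} gauss_phi"
proof -
  have "(gauss_phi has_integral (integral {a..e} gauss_phi + gauss_Q e)) ({a..e} \<union> {e..})"
    unfolding gauss_Q_def
    by (intro has_integral_Un integrable_integral phi_integrable integrable_continuous_interval phi_cont)
       (auto intro: negligible_subset[OF negligible_sing[of e]])
  moreover have "{a..e} \<union> {e..} = {a..}" using assms by auto
  ultimately have "gauss_Q a = integral {a..e} gauss_phi + gauss_Q e"
    unfolding gauss_Q_def[of a] by (simp add: integral_unique)
  then show ?thesis by simp
qed

lemma Q_deriv: "(gauss_Q has_real_derivative (- gauss_phi x)) (at x)"
proof -
  have "((\<lambda>e. integral {x-1..e} gauss_phi) has_real_derivative gauss_phi x) (at x within {x-1..x+1})"
    by (intro integral_has_real_derivative phi_cont) auto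
  then have "((\<lambda>e. integral {x-1..e} gauss_phi) has_real_derivative gauss_phi x) (at x)"
    by (simp add: at_within_Icc_at)
  then have "((\<lambda>e. gauss_Q (x-1) - integral {x-1..e} gauss_phi) has_real_derivative - gauss_phi x) (at x)"
    by (auto intro!: derivative_eq_intros)
  then show ?thesis
    by (rule has_field_derivative_transform_within_open[where S = "{x-1<..}"])
       (auto intro!: Q_split[symmetric] simp del: Q_split)
qed

lemma phi_deriv_chain [derivative_intros]:
  "(g has_real_derivative g') (at x within S) \<Longrightarrow>
   ((\<lambda>x. gauss_phi (g x)) has_real_derivative (- g x * gauss_phi (g x) * g')) (at x within S)"
  using DERIV_chain2[OF phi_deriv] by blast

lemma Q_deriv_chain [derivative_intros]:
  "(g has_real_derivative g') (at x within S) \<Longrightarrow>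
   ((\<lambda>x. gauss_Q (g x)) has_real_derivative (- gauss_phi (g x) * g')) (at x within S)"
  using DERIV_chain2[OF Q_deriv] by blast

lemma not_convex_local:
  fixes f f' :: "real \<Rightarrow> real"
  assumes pc: "p < c" and cq: "c < q"
    and der: "\<And>x. x \<in> {p<..<q} \<Longrightarrow> (f has_real_derivative f' x) (at x)"
    and der2: "(f' has_real_derivative d) (at c)" and dneg: "d < 0"
  shows "\<exists>r>0. p < c - r \<and> c + r < q \<and> \<not> convex_on {c-r..c+r} f"
proof -
  obtain d1 where d1: "d1 > 0" "\<And>h. h > 0 \<Longrightarrow> h < d1 \<Longrightarrow> f' c > f' (c + h)"
    using DERIV_neg_dec_right[OF der2 dneg] by blast
  define r where "r = min d1 (min (c-p) (q-c)) / 2"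
  have m: "min d1 (min (c-p) (q-c)) \<le> c - p" "min d1 (min (c-p) (q-c)) \<le> q - c"
    "min d1 (min (c-p) (q-c)) \<le> d1" "min d1 (min (c-p) (q-c)) > 0"
    using pc cq d1(1) by auto
  have r: "r > 0" "p < c - r" "c + r < q" "r < d1"
    using m unfolding r_def by linarith+
  define h where "h = r / 2"
  have h: "h > 0" "h < d1" "h < r" using r unfolding h_def by auto
  have "\<not> convex_on {c-r..c+r} f"
  proof
    assume conv: "convex_on {c-r..c+r} f"
    have int: "interior {c-r..c+r} = {c-r<..<c+r}" by simp
    have d_c: "(f has_real_derivative f' c) (at c within {c-r..c+r})"
      using der[of c] pc cq by (auto intro: has_field_derivative_at_within)
    have d_ch: "(f has_real_derivative f' (c+h)) (at (c+h) within {c-r..c+r})"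
      using der[of "c+h"] r h by (auto intro: has_field_derivative_at_within)
    have t1: "f (c+h) - f c \<ge> f' c * ((c+h) - c)"
      by (rule convex_on_imp_above_tangent[OF conv _ _ _ d_c]) (use r h int in auto)
    have t2: "f c - f (c+h) \<ge> f' (c+h) * (c - (c+h))"
      by (rule convex_on_imp_above_tangent[OF conv _ _ _ d_ch]) (use r h int in auto)
    from t1 t2 have "(f' c - f' (c+h)) * h \<le> 0" by (simp add: algebra_simps)
    moreover have "(f' c - f' (c+h)) * h > 0" using d1(2)[OF h(1) h(2)] h by simp
    ultimately show False by simp
  qed
  then show ?thesis using r by blast
qed

lemma exp_half_lt_2: "exp (1/2::real) < 2"
proof -
  have "exp (1/2::real) * exp (1/2) = exp 1" by (simp add: exp_add[symmetric])
  also have "\<dots> < 4" using exp_le by simp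
  finally have "exp (1/2::real) * exp (1/2) < 2 * 2" by simp
  show ?thesis
  proof (rule ccontr)
    assume "\<not> exp (1/2::real) < 2"
    then have h2: "2 \<le> exp (1/2::real)" by simp
    have "(2::real) * 2 \<le> exp (1/2) * exp (1/2)"
      by (rule mult_mono[OF h2 h2]) auto
    with \<open>exp (1/2::real) * exp (1/2) < 2 * 2\<close> show False by linarith
  qed
qed

lemma part1:
  assumes s: "(\<sigma>y::real) > 0"
  shows "\<not> convex_on UNIV (P_DCO \<sigma>y \<epsilon>top)"
proof
  assume conv: "convex_on UNIV (P_DCO \<sigma>y \<epsilon>top)"
  define t where "t = \<epsilon>top"
  define f' where "f' = (\<lambda>e. \<sigma>y * (1 - gauss_Q e - gauss_phi (t-e) * (1 + (t-e) - (t-e)^2)))"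
  have feq: "P_DCO \<sigma>y \<epsilon>top = (\<lambda>e. e * \<sigma>y + \<sigma>y * (gauss_phi e - gauss_phi (t - e)
        + (t - e) * gauss_phi (t - e) - e * gauss_Q e))"
    by (rule ext) (simp add: P_DCO_def t_def)
  have der: "(P_DCO \<sigma>y \<epsilon>top has_real_derivative f' x) (at x)" for x
    unfolding feq f'_def
    apply (auto intro!: derivative_eq_intros)
    apply (simp add: algebra_simps power2_eq_square)
    done
  have der2: "(f' has_real_derivative \<sigma>y * (gauss_phi (t-1) - 2 * gauss_phi 1)) (at (t-1))"
    unfolding f'_def
    apply (auto intro!: derivative_eq_intros) done
  have "gauss_phi (t-1) \<le> 1 / sqrt (2*pi)"
    unfolding gauss_phi_def by (simp add: divide_right_mono)
  also have "1 / sqrt (2*pi) < 2 * gauss_phi 1"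
  proof -
    have e1: "- ((1::real)\<^sup>2) / 2 = - (1/2)" by simp
    have e2: "exp (- (1/2::real)) = 1 / exp (1/2)" by (simp add: exp_minus inverse_eq_divide)
    have "gauss_phi 1 = (1 / exp (1/2)) / sqrt (2*pi)"
      unfolding gauss_phi_def e1 e2 by simp
    moreover have "1 < 2 / exp (1/2::real)" using exp_half_lt_2 by (simp add: divide_simps)
    then have "1 / sqrt (2*pi) < (2 / exp (1/2)) / sqrt (2*pi)"
      by (intro divide_strict_right_mono) auto
    ultimately show ?thesis by simp
  qed
  finally have dneg: "\<sigma>y * (gauss_phi (t-1) - 2 * gauss_phi 1) < 0"
    using s by (simp add: mult_pos_neg)
  obtain r where "r > 0" "\<not> convex_on {t-1-r..t-1+r} (P_DCO \<sigma>y \<epsilon>top)"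
    using not_convex_local[of "t-2" "t-1" "t", OF _ _ der der2 dneg] by auto
  then show False using convex_on_subset[OF conv] by auto
qed

lemma part2:
  fixes y :: real
  assumes y: "y > 0"
  shows "\<exists>a b :: real ^ 'n. closed_segment a b \<subseteq> UNIV - {0}
              \<and> \<not> convex_on (closed_segment a b) (P_ACO y)"
proof -
  define g where "g = (\<lambda>\<sigma>::real. \<sigma> / sqrt (2*pi) + \<sigma> * ((y/\<sigma>) * gauss_Q (y/\<sigma>) - gauss_phi (y/\<sigma>)))"
  define g' where "g' = (\<lambda>\<sigma>::real. 1 / sqrt (2*pi) - gauss_phi (y/\<sigma>))"
  have sq: "sqrt (2*pi) * sqrt (2*pi) = 2*pi" by simp
  have der: "(g has_real_derivative g' x) (at x)" if "x \<in> {1/2<..<2}" for x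
    using that unfolding g_def g'_def
    apply (auto intro!: derivative_eq_intros)
    using sq apply (simp add: field_simps)
    done
  have der2: "(g' has_real_derivative (- (y^2 * gauss_phi y))) (at 1)"
    unfolding g'_def
    apply (auto intro!: derivative_eq_intros)
    apply (simp add: power2_eq_square)
    done
  have "y^2 > 0" using y by simp
  then have dneg: "- (y^2 * gauss_phi y) < 0" using mult_pos_pos[OF _ phi_pos[of y], of "y^2"] by linarith
  obtain r where r: "r > 0" "1/2 < 1 - r" "1 + r < 2" "\<not> convex_on {1-r..1+r} g"
    using not_convex_local[of "1/2" 1 2, OF _ _ der der2 dneg] by auto
  define v :: "real ^ 'n" where "v = axis undefined 1"
  have v0: "v \<noteq> 0" unfolding v_def by (simp add: axis_eq_0_iff)
  have sig: "sigma_y (l *\<^sub>R v) = \<bar>l\<bar>" for l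
  proof -
    have "(\<Sum>i\<in>UNIV. ((l *\<^sub>R v) $ i)\<^sup>2) = (\<Sum>i\<in>(UNIV::'n set). if i = undefined then l\<^sup>2 else 0)"
      by (intro sum.cong refl) (auto simp: v_def axis_def)
    also have "\<dots> = l\<^sup>2" by simp
    finally show ?thesis unfolding sigma_y_def by simp
  qed
  have Peq: "P_ACO y (l *\<^sub>R v) = g l" if "l > 0" for l
    using that by (simp add: P_ACO_def Let_def sig g_def)
  define a where "a = (1 - r) *\<^sub>R v"
  define b where "b = (1 + r) *\<^sub>R v"
  have segpt: "(1 - u) *\<^sub>R a + u *\<^sub>R b = (1 - r + 2*(u*r)) *\<^sub>R v" for u
    unfolding a_def b_def by (simp add: vec_eq_iff algebra_simps)
  have sub: "closed_segment a b \<subseteq> UNIV - {0}"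
  proof
    fix x assume "x \<in> closed_segment a b"
    then obtain u where u: "0 \<le> u" "u \<le> 1" "x = (1 - u) *\<^sub>R a + u *\<^sub>R b"
      unfolding closed_segment_def by auto
    have "u*r \<ge> 0" using u r by simp
    then have "1 - r + 2*(u*r) > 0" using r by linarith
    then show "x \<in> UNIV - {0}" using u(3) segpt v0 by auto
  qed
  have inseg: "l *\<^sub>R v \<in> closed_segment a b" if "l \<in> {1-r..1+r}" for l
  proof -
    define u where "u = (l - (1 - r)) / (2*r)"
    have u: "0 \<le> u" "u \<le> 1" using that r unfolding u_def by (auto simp: divide_simps)
    have "1 - r + 2*(u*r) = l" using r unfolding u_def by (simp add: field_simps)
    then have "l *\<^sub>R v = (1 - u) *\<^sub>R a + u *\<^sub>R b" using segpt by simp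
    then show ?thesis using u unfolding closed_segment_def by auto
  qed
  have "\<not> convex_on (closed_segment a b) (P_ACO y)"
  proof
    assume conv: "convex_on (closed_segment a b) (P_ACO y)"
    have "convex_on {1-r..1+r} g"
    proof (rule convex_onI)
      fix t x z :: real
      assume t: "0 < t" "t < 1" and x: "x \<in> {1-r..1+r}" and z: "z \<in> {1-r..1+r}"
      have pos: "x > 0" "z > 0" using x z r by auto
      have "(1 - t) * x \<ge> 0" "t * z > 0" using pos t by simp_all
      then have "(1 - t) * x + t * z > 0" by linarith
      then have "g ((1 - t) *\<^sub>R x + t *\<^sub>R z) = P_ACO y ((1 - t) *\<^sub>R (x *\<^sub>R v) + t *\<^sub>R (z *\<^sub>R v))"
        using Peq[of "(1 - t) * x + t * z"] by (simp add: algebra_simps)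
      also have "\<dots> \<le> (1 - t) * P_ACO y (x *\<^sub>R v) + t * P_ACO y (z *\<^sub>R v)"
        using t by (intro convex_onD[OF conv] inseg x z) auto
      also have "\<dots> = (1 - t) * g x + t * g z" using Peq pos by simp
      finally show "g ((1 - t) *\<^sub>R x + t *\<^sub>R z) \<le> (1 - t) * g x + t * g z" .
    qed simp
    then show False using r(4) by simp
  qed
  then show ?thesis using sub by blast
qed

theorem lemma1:
  shows "(\<forall>\<sigma>y \<epsilon>top :: real. \<sigma>y > 0 \<longrightarrow> \<not> convex_on UNIV (P_DCO \<sigma>y \<epsilon>top))
       \<and> (\<forall>ymax :: real. ymax > 0 \<longrightarrow>
           (\<exists>a b :: real ^ 'n. closed_segment a b \<subseteq> UNIV - {0}
              \<and> \<not> convex_on (closed_segment a b) (P_ACO ymax)))"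
  apply (intro conjI allI impI)
   apply (erule part1)
  apply (erule part2)
  done

end
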